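(* Let $m\in\mathbb{Z}_{>0}$, let $X$ be a set with $|X|=4m$, and let $\mu_X$ be the uniform distribution on $X$. Let $S$ be the class of all $s:X\to\{-1,1\}$ with $|\{x:s(x)=1\}|=m$, and $B$ the class of all $b:X\to\{-1,1\}$ with $|\{x:b(x)=1\}|=2m$. Then for all $\varepsilon,\delta\ge0$, $\#\mathsf{CompL}^{\mu_X}(S,B,\varepsilon,\delta)=0$, whereas for all $\varepsilon\in(0,1/4)$ and $\delta\in(0,1/2)$, $\#\mathsf{CompL}^{\mu_X}(B,S,\varepsilon,\delta)\ge(1/2-2\varepsilon)m$.
   Context: Distribution-specific comparative learning $\mathsf{CompL}^{\mu_X}_n(S,B,\varepsilon,\delta)$: (possibly randomized) learners taking $n$ points of $X\times\{-1,1\}$ and outputting $f:X\to\{-1,1\}$ such that for every distribution $\mu$ on $X\times\{-1,1\}$ with marginal $\mu|_X=\mu_X$ and $\Pr_\mu[s(x)=y]=1$ for some $s\in S$, given $n$ i.i.d. samples, with probability $\ge1-\delta$, $\Pr_\mu[f(x)\ne y]\le\inf_{b\in B}\Pr_\mu[b(x)\ne y]+\varepsilon$. $\#\mathsf{CompL}^{\mu_X}$ is the least such $n$. *)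

theory Defs
  imports "HOL-Probability.Probability"
begin

text \<open>Labels are the integers -1 and 1. A distribution on X x {-1,1} is a pmf on 'a x int
  whose support lies in X x {-1,1}.\<close>

definition labels :: "int set" where
  "labels = {-1, 1}"

fun iid_sample :: "'b pmf \<Rightarrow> nat \<Rightarrow> 'b list pmf" where
  "iid_sample \<mu> 0 = return_pmf []"
| "iid_sample \<mu> (Suc n) = bind_pmf \<mu> (\<lambda>z. map_pmf (\<lambda>zs. z # zs) (iid_sample \<mu> n))"

definition err :: "('a \<times> int) pmf \<Rightarrow> ('a \<Rightarrow> int) \<Rightarrow> real" where
  "err \<mu> f = measure_pmf.prob \<mu> {(x, y). f x \<noteq> y}"

text \<open>A (possibly randomized) learner maps a sample to a distribution over hypotheses.
  L is a member of CompL^{muX}_n(S,B,eps,delta) over domain X.\<close>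
definition is_compl_learner ::
  "'a set \<Rightarrow> 'a pmf \<Rightarrow> ('a \<Rightarrow> int) set \<Rightarrow> ('a \<Rightarrow> int) set \<Rightarrow> real \<Rightarrow> real \<Rightarrow> nat
    \<Rightarrow> (('a \<times> int) list \<Rightarrow> ('a \<Rightarrow> int) pmf) \<Rightarrow> bool" where
  "is_compl_learner X \<mu>X S B \<epsilon> \<delta> n L \<longleftrightarrow>
     (\<forall>D. set D \<subseteq> X \<times> labels \<longrightarrow> (\<forall>f\<in>set_pmf (L D). f ` X \<subseteq> labels)) \<and>
     (\<forall>\<mu> :: ('a \<times> int) pmf.
        set_pmf \<mu> \<subseteq> X \<times> labels \<and> map_pmf fst \<mu> = \<mu>X \<and>
        (\<exists>s\<in>S. measure_pmf.prob \<mu> {(x, y). s x = y} = 1) \<longrightarrow>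
        measure_pmf.prob (bind_pmf (iid_sample \<mu> n) L)
           {f. err \<mu> f \<le> (\<Sqinter>b\<in>B. err \<mu> b) + \<epsilon>} \<ge> 1 - \<delta>)"

definition compl_num ::
  "'a set \<Rightarrow> 'a pmf \<Rightarrow> ('a \<Rightarrow> int) set \<Rightarrow> ('a \<Rightarrow> int) set \<Rightarrow> real \<Rightarrow> real \<Rightarrow> enat" where
  "compl_num X \<mu>X S B \<epsilon> \<delta> =
     (if \<exists>n L. is_compl_learner X \<mu>X S B \<epsilon> \<delta> n L
      then enat (LEAST n. \<exists>L. is_compl_learner X \<mu>X S B \<epsilon> \<delta> n L) else \<infinity>)"

definition fixed_pos_class :: "'a set \<Rightarrow> nat \<Rightarrow> ('a \<Rightarrow> int) set" where
  "fixed_pos_class X k = {h. h ` X \<subseteq> labels \<and> card {x\<in>X. h x = 1} = k}"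

end

theory Submission
  imports Defs
begin
lemma iid_map: "iid_sample (map_pmf h p) n = map_pmf (map h) (iid_sample p n)"
  by (induction n) (simp_all add: bind_map_pmf map_bind_pmf map_pmf_comp)

lemma iid_set: "xs \<in> set_pmf (iid_sample p n) \<Longrightarrow> length xs = n \<and> set xs \<subseteq> set_pmf p"
  by (induction n arbitrary: xs) (auto, blast)

lemma err_lab:
  assumes "finite X" "X \<noteq> {}"
  shows "err (map_pmf (\<lambda>x. (x, s x)) (pmf_of_set X)) f = card {x\<in>X. f x \<noteq> s x} / card X"
proof -
  have "(\<lambda>x. (x, s x)) -` {(x, y). f x \<noteq> y} = {x. f x \<noteq> s x}" by auto
  moreover have "X \<inter> {x. f x \<noteq> s x} = {x\<in>X. f x \<noteq> s x}" by auto
  ultimately show ?thesis using assms by (simp add: err_def measure_pmf_of_set)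
qed

lemma inv_sum:
  fixes N :: "'t \<Rightarrow> 'b pmf" and Sc :: "'t \<Rightarrow> 'b set"
  assumes fin: "finite A" and bij: "bij_betw \<iota> A A"
    and NN: "\<And>T. T \<in> A \<Longrightarrow> N (\<iota> T) = N T"
    and dis: "\<And>T. T \<in> A \<Longrightarrow> Sc T \<inter> Sc (\<iota> T) = {}"
  shows "(\<Sum>T\<in>A. measure_pmf.prob (N T) (Sc T)) \<le> real (card A) / 2"
proof -
  have "(\<Sum>T\<in>A. measure_pmf.prob (N T) (Sc T)) = (\<Sum>T\<in>A. measure_pmf.prob (N (\<iota> T)) (Sc (\<iota> T)))"
    using sum.reindex_bij_betw[OF bij, of "\<lambda>T. measure_pmf.prob (N T) (Sc T)"] by simp
  also have "\<dots> = (\<Sum>T\<in>A. measure_pmf.prob (N T) (Sc (\<iota> T)))" using NN by simp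
  finally have e: "(\<Sum>T\<in>A. measure_pmf.prob (N T) (Sc T)) = (\<Sum>T\<in>A. measure_pmf.prob (N T) (Sc (\<iota> T)))" .
  have "(\<Sum>T\<in>A. measure_pmf.prob (N T) (Sc T)) + (\<Sum>T\<in>A. measure_pmf.prob (N T) (Sc (\<iota> T)))
      = (\<Sum>T\<in>A. measure_pmf.prob (N T) (Sc T \<union> Sc (\<iota> T)))"
    unfolding sum.distrib[symmetric]
    by (rule sum.cong) (auto simp: measure_pmf.finite_measure_Union dis)
  also have "\<dots> \<le> (\<Sum>T\<in>A. 1)" by (rule sum_mono) simp
  finally show ?thesis using e by simp
qed

lemma real_eq:
  assumes "measure_pmf.prob \<mu> {(x, y). s x = y} = 1"
  shows "\<mu> = map_pmf (\<lambda>x. (x, s x)) (map_pmf fst \<mu>)"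
proof -
  have "measure_pmf.prob \<mu> (UNIV - {(x, y). s x = y}) = 0"
    using measure_pmf.prob_compl[of "{(x, y). s x = y}" \<mu>] assms by simp
  hence sub: "set_pmf \<mu> \<subseteq> {(x, y). s x = y}" unfolding measure_pmf_zero_iff by blast
  have "map_pmf (\<lambda>x. (x, s x)) (map_pmf fst \<mu>) = map_pmf (\<lambda>p. (fst p, s (fst p))) \<mu>"
    by (simp add: map_pmf_comp)
  also have "\<dots> = map_pmf id \<mu>" by (rule map_pmf_cong) (use sub in auto)
  finally show ?thesis by simp
qed

lemma part1:
  assumes "m > 0" "finite X" "card X = 4 * m" "\<epsilon> \<ge> 0" "\<delta> \<ge> 0"
  shows "is_compl_learner X (pmf_of_set X) (fixed_pos_class X m) (fixed_pos_class X (2 * m)) \<epsilon> \<delta> 0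
           (\<lambda>_. return_pmf (\<lambda>_. -1))"
  unfolding is_compl_learner_def
proof (intro conjI allI impI)
  fix D :: "('a \<times> int) list"
  show "\<forall>f\<in>set_pmf (return_pmf (\<lambda>_. - 1)). f ` X \<subseteq> labels" by (auto simp: labels_def)
next
  fix \<mu> :: "('a \<times> int) pmf"
  assume h: "set_pmf \<mu> \<subseteq> X \<times> labels \<and> map_pmf fst \<mu> = pmf_of_set X \<and>
        (\<exists>s\<in>fixed_pos_class X m. measure_pmf.prob \<mu> {(x, y). s x = y} = 1)"
  then obtain s where sS: "s \<in> fixed_pos_class X m" and s1: "measure_pmf.prob \<mu> {(x, y). s x = y} = 1"
    by blast
  have Xne: "X \<noteq> {}" using assms by auto
  have mu: "\<mu> = map_pmf (\<lambda>x. (x, s x)) (pmf_of_set X)" using real_eq[OF s1] h by simp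
  have cX: "real (card X) = 4 * real m" using assms by simp
  have sl: "\<And>x. x \<in> X \<Longrightarrow> s x = 1 \<or> s x = -1" using sS by (auto simp: fixed_pos_class_def labels_def)
  have cs: "card {x\<in>X. s x = 1} = m" using sS by (simp add: fixed_pos_class_def)
  have "{x\<in>X. (-1::int) \<noteq> s x} = {x\<in>X. s x = 1}" using sl by force
  hence e1: "err \<mu> (\<lambda>_. -1) = real m / (4 * real m)"
    unfolding mu using err_lab[OF assms(2) Xne] cs cX by simp
  have lb: "real m / (4 * real m) \<le> err \<mu> b" if b: "b \<in> fixed_pos_class X (2 * m)" for b
  proof -
    have cb: "card {x\<in>X. b x = 1} = 2 * m" using b by (simp add: fixed_pos_class_def)
    have "{x\<in>X. b x = 1} - {x\<in>X. s x = 1} \<subseteq> {x\<in>X. b x \<noteq> s x}" by auto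
    hence "card ({x\<in>X. b x = 1} - {x\<in>X. s x = 1}) \<le> card {x\<in>X. b x \<noteq> s x}"
      by (intro card_mono) (use assms in auto)
    moreover have "card {x\<in>X. b x = 1} - card {x\<in>X. s x = 1} \<le> card ({x\<in>X. b x = 1} - {x\<in>X. s x = 1})"
      by (rule diff_card_le_card_Diff) (use assms in auto)
    ultimately have "m \<le> card {x\<in>X. b x \<noteq> s x}" using cb cs by linarith
    hence "real m / (4 * real m) \<le> real (card {x\<in>X. b x \<noteq> s x}) / (4 * real m)"
      by (intro divide_right_mono) auto
    thus ?thesis unfolding mu using err_lab[OF assms(2) Xne] cX by simp
  qed
  have "2 * m \<le> card X" using assms by simp
  then obtain A where A: "A \<subseteq> X" "card A = 2 * m" by (meson obtain_subset_with_card_n)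
  have "(\<lambda>x. if x \<in> A then 1 else -1) \<in> fixed_pos_class X (2 * m)"
  proof -
    have "{x\<in>X. (if x \<in> A then 1 else -1 :: int) = 1} = A" using A by auto
    thus ?thesis using A by (auto simp: fixed_pos_class_def labels_def)
  qed
  hence ne: "fixed_pos_class X (2 * m) \<noteq> {}" by blast
  have "real m / (4 * real m) \<le> (\<Sqinter>b\<in>fixed_pos_class X (2 * m). err \<mu> b)"
    by (rule cInf_greatest) (use ne lb in auto)
  hence "err \<mu> (\<lambda>_. -1) \<le> (\<Sqinter>b\<in>fixed_pos_class X (2 * m). err \<mu> b) + \<epsilon>"
    using e1 assms(4) by linarith
  thus "1 - \<delta> \<le> measure_pmf.prob (bind_pmf (iid_sample \<mu> 0) (\<lambda>_. return_pmf (\<lambda>_. - 1)))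
       {f. err \<mu> f \<le> (\<Sqinter>b\<in>fixed_pos_class X (2 * m). err \<mu> b) + \<epsilon>}"
    using assms(5) by (simp add: indicator_def)
qed

definition sT :: "('a \<Rightarrow> nat \<times> bool) \<Rightarrow> nat set \<Rightarrow> 'a \<Rightarrow> int" where
  "sT ie T x = (if snd (ie x) = (fst (ie x) \<in> T) then 1 else -1)"

lemma part2:
  assumes m0: "m > 0" and fX: "finite X" and cX: "card X = 4 * m" and e0: "0 < \<epsilon>" and e1: "\<epsilon> < 1/4"
    and d1: "\<delta> < 1/2"
    and L: "is_compl_learner X (pmf_of_set X) (fixed_pos_class X (2 * m)) (fixed_pos_class X m) \<epsilon> \<delta> n L"
  shows "(1 - 4 * \<epsilon>) * real m \<le> real n"
proof (rule ccontr)
  assume "\<not> ?thesis"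
  hence nlt: "real n < (1 - 4 * \<epsilon>) * real m" by simp
  define I where "I = {0..<2 * m}"
  have "card (I \<times> (UNIV :: bool set)) = card X" using cX by (simp add: I_def card_cartesian_product)
  then obtain e where e: "bij_betw e (I \<times> (UNIV :: bool set)) X"
    using finite_same_card_bij[of "I \<times> (UNIV :: bool set)" X] fX by (auto simp: I_def)
  define ie where "ie = inv_into (I \<times> (UNIV :: bool set)) e"
  have ie1: "\<And>x. x \<in> X \<Longrightarrow> ie x \<in> I \<times> UNIV \<and> e (ie x) = x"
    using e unfolding ie_def by (meson bij_betw_inv_into_left bij_betw_inv_into_right bij_betwE bij_betw_inv_into)
  have ie2: "\<And>p. p \<in> I \<times> UNIV \<Longrightarrow> ie (e p) = p \<and> e p \<in> X"
    using e unfolding ie_def by (meson bij_betw_inv_into_left bij_betwE)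
  have einj: "inj_on e (I \<times> UNIV)" using e bij_betw_def by blast
  define s where "s T = sT ie T" for T
  define \<mu> where "\<mu> T = map_pmf (\<lambda>x. (x, s T x)) (pmf_of_set X)" for T
  define B where "B = fixed_pos_class X m"
  define Sc where "Sc T = {f. err (\<mu> T) f \<le> (\<Sqinter>b\<in>B. err (\<mu> T) b) + \<epsilon>}" for T
  define XS where "XS = iid_sample (pmf_of_set X) n"
  define N where "N T xs = L (map (\<lambda>x. (x, s T x)) xs)" for T xs
  have Xne: "X \<noteq> {}" using cX m0 by auto
  have cXr: "real (card X) = 4 * real m" using cX by simp
  have errf: "err (\<mu> T) f = real (card {x\<in>X. f x \<noteq> s T x}) / (4 * real m)" for T f
    unfolding \<mu>_def using err_lab[OF fX Xne] cXr by simp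
  have pos: "{x\<in>X. s T x = 1} = e ` ((\<lambda>j. (j, j \<in> T)) ` I)" for T
  proof
    show "{x\<in>X. s T x = 1} \<subseteq> e ` ((\<lambda>j. (j, j \<in> T)) ` I)"
    proof
      fix x assume "x \<in> {x\<in>X. s T x = 1}"
      hence x: "x \<in> X" "snd (ie x) = (fst (ie x) \<in> T)"
        by (auto simp: s_def sT_def split: if_splits)
      have "ie x = (fst (ie x), fst (ie x) \<in> T)" using x(2) by (simp add: prod_eq_iff)
      thus "x \<in> e ` ((\<lambda>j. (j, j \<in> T)) ` I)" using ie1[OF x(1)]
        by (metis (no_types, lifting) SigmaE fst_conv image_eqI)
    qed
  next
    show "e ` ((\<lambda>j. (j, j \<in> T)) ` I) \<subseteq> {x\<in>X. s T x = 1}"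
      using ie2 by (auto simp: s_def sT_def)
  qed
  have cpos: "card {x\<in>X. s T x = 1} = 2 * m" for T
  proof -
    have "card (e ` ((\<lambda>j. (j, j \<in> T)) ` I)) = card ((\<lambda>j. (j, j \<in> T)) ` I)"
      by (rule card_image) (rule inj_on_subset[OF einj], auto)
    also have "\<dots> = card I" by (rule card_image) (auto simp: inj_on_def)
    finally show ?thesis using pos by (simp add: I_def)
  qed
  have sS: "s T \<in> fixed_pos_class X (2 * m)" for T
    using cpos by (auto simp: fixed_pos_class_def labels_def s_def sT_def)
  have Inf_le: "(\<Sqinter>b\<in>B. err (\<mu> T) b) \<le> 1/4" for T
  proof -
    have "m \<le> card {x\<in>X. s T x = 1}" using cpos by simp
    then obtain A where A: "A \<subseteq> {x\<in>X. s T x = 1}" "card A = m" "finite A"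
      by (meson obtain_subset_with_card_n)
    define b where "b x = (if x \<in> A then 1 else -1 :: int)" for x
    have "{x\<in>X. b x = 1} = A" using A by (auto simp: b_def)
    hence bB: "b \<in> B" using A by (auto simp: B_def fixed_pos_class_def labels_def b_def)
    have "{x\<in>X. b x \<noteq> s T x} = {x\<in>X. s T x = 1} - A" using A
      by (auto simp: b_def s_def sT_def)
    hence "card {x\<in>X. b x \<noteq> s T x} = 2 * m - m" using A cpos[of T]
      by (simp add: card_Diff_subset)
    hence "err (\<mu> T) b = 1/4" using errf m0 by simp
    moreover have "(\<Sqinter>b\<in>B. err (\<mu> T) b) \<le> err (\<mu> T) b"
      by (rule cInf_lower) (use bB in \<open>auto intro!: bdd_belowI[where m=0] simp: err_def\<close>)
    ultimately show ?thesis by simp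
  qed
  have ScT: "f \<in> Sc T \<Longrightarrow> real (card {x\<in>X. f x \<noteq> s T x}) \<le> (1 + 4 * \<epsilon>) * real m" for f T
  proof -
    assume "f \<in> Sc T"
    hence "err (\<mu> T) f \<le> 1/4 + \<epsilon>" using Inf_le[of T] by (simp add: Sc_def)
    hence "real (card {x\<in>X. f x \<noteq> s T x}) / (4 * real m) \<le> 1/4 + \<epsilon>" using errf by simp
    thus ?thesis using m0 by (simp add: field_simps)
  qed
  have guar: "1 - \<delta> \<le> measure_pmf.prob (bind_pmf XS (N T)) (Sc T)" for T
  proof -
    have c: "set_pmf (\<mu> T) \<subseteq> X \<times> labels \<and> map_pmf fst (\<mu> T) = pmf_of_set X \<and>
        (\<exists>s\<in>fixed_pos_class X (2 * m). measure_pmf.prob (\<mu> T) {(x, y). s x = y} = 1)"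
    proof (intro conjI bexI)
      show "set_pmf (\<mu> T) \<subseteq> X \<times> labels" using fX Xne
        by (auto simp: \<mu>_def labels_def s_def sT_def split: if_splits)
      show "map_pmf fst (\<mu> T) = pmf_of_set X" by (simp add: \<mu>_def map_pmf_comp)
      show "s T \<in> fixed_pos_class X (2 * m)" by (rule sS)
      show "measure_pmf.prob (\<mu> T) {(x, y). s T x = y} = 1"
        by (simp add: \<mu>_def measure_pmf.prob_space)
    qed
    have "bind_pmf (iid_sample (\<mu> T) n) L = bind_pmf XS (N T)"
      by (simp add: \<mu>_def iid_map XS_def N_def[abs_def] bind_map_pmf)
    thus ?thesis using L c unfolding is_compl_learner_def Sc_def B_def by metis
  qed
  have "(1 - 4 * \<epsilon>) * real m = real m - 4 * \<epsilon> * real m" by (simp add: algebra_simps)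
  moreover have "0 \<le> 4 * \<epsilon> * real m" using e0 by simp
  ultimately have "real n < real m" using nlt by linarith
  hence nltm: "n < m" by simp
  have pw: "(\<Sum>T\<in>Pow I. measure_pmf.prob (N T xs) (Sc T)) \<le> real (card (Pow I)) / 2"
    if xs: "xs \<in> set_pmf XS" for xs
  proof -
    have lxs: "length xs = n" using iid_set[OF xs[unfolded XS_def]] by simp
    define V where "V = (\<lambda>x. fst (ie x)) ` set xs"
    define W where "W = I - V"
    have "card V \<le> n" unfolding V_def using lxs
      by (metis card_image_le card_length finite_set le_trans)
    moreover have "card I - card V \<le> card W" unfolding W_def
      by (rule diff_card_le_card_Diff) (simp add: V_def)
    ultimately have cW: "2 * m - n \<le> card W" by (simp add: I_def)
    have WI: "W \<subseteq> I" by (auto simp: W_def)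
    define \<iota> where "\<iota> T = (T - W) \<union> (W - T)" for T
    have bij: "bij_betw \<iota> (Pow I) (Pow I)"
      by (rule bij_betw_byWitness[where f'=\<iota>]) (use WI in \<open>auto simp: \<iota>_def\<close>)
    have NN: "N (\<iota> T) xs = N T xs" for T
    proof -
      have "s (\<iota> T) x = s T x" if "x \<in> set xs" for x
      proof -
        have "fst (ie x) \<notin> W" using that by (auto simp: W_def V_def)
        thus ?thesis by (auto simp: s_def sT_def \<iota>_def)
      qed
      thus ?thesis unfolding N_def by (metis (no_types, lifting) map_eq_conv)
    qed
    have dis: "Sc T \<inter> Sc (\<iota> T) = {}" for T
    proof (rule ccontr)
      assume "Sc T \<inter> Sc (\<iota> T) \<noteq> {}"
      then obtain f where f1: "f \<in> Sc T" and f2: "f \<in> Sc (\<iota> T)" by blast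
      define D where "D = {x\<in>X. s T x \<noteq> s (\<iota> T) x}"
      have "D \<subseteq> {x\<in>X. f x \<noteq> s T x} \<union> {x\<in>X. f x \<noteq> s (\<iota> T) x}" by (auto simp: D_def)
      hence "card D \<le> card ({x\<in>X. f x \<noteq> s T x} \<union> {x\<in>X. f x \<noteq> s (\<iota> T) x})"
        by (intro card_mono) (use fX in auto)
      also have "\<dots> \<le> card {x\<in>X. f x \<noteq> s T x} + card {x\<in>X. f x \<noteq> s (\<iota> T) x}"
        by (rule card_Un_le)
      finally have cD: "real (card D) \<le> 2 * ((1 + 4 * \<epsilon>) * real m)"
        using ScT[OF f1] ScT[OF f2] by linarith
      have sub: "e ` (W \<times> UNIV) \<subseteq> D"
      proof
        fix y assume "y \<in> e ` (W \<times> UNIV)"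
        then obtain j b where j: "j \<in> W" and y: "y = e (j, b)" by auto
        have "(j, b) \<in> I \<times> UNIV" using j WI by auto
        from ie2[OF this] have "ie y = (j, b)" "y \<in> X" using y by auto
        thus "y \<in> D" using j by (auto simp: D_def s_def sT_def \<iota>_def)
      qed
      have "card (e ` (W \<times> UNIV)) = card (W \<times> (UNIV :: bool set))"
        by (rule card_image) (rule inj_on_subset[OF einj], use WI in auto)
      also have "\<dots> = 2 * card W" by (simp add: card_cartesian_product)
      finally have ceq: "card (e ` (W \<times> UNIV)) = 2 * card W" .
      have "finite D" using fX by (simp add: D_def)
      hence "card (e ` (W \<times> UNIV)) \<le> card D" using sub by (rule card_mono)
      hence "2 * card W \<le> card D" using ceq by simp
      hence "2 * (2 * m - n) \<le> card D" using cW by linarith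
      hence "real (2 * (2 * m - n)) \<le> real (card D)" by linarith
      hence "2 * (2 * real m - real n) \<le> real (card D)" using nltm by (simp add: of_nat_diff)
      thus False using cD nlt by (simp add: algebra_simps)
    qed
    show ?thesis by (rule inv_sum[OF _ bij]) (use NN dis in \<open>auto simp: I_def\<close>)
  qed
  define c where "c = card (Pow I)"
  have cpos: "c > 0" by (simp add: c_def I_def card_Pow)
  have "(\<Sum>T\<in>Pow I. ennreal (1 - \<delta>)) \<le> (\<Sum>T\<in>Pow I. emeasure (bind_pmf XS (N T)) (Sc T))"
    by (rule sum_mono) (use guar in \<open>simp add: measure_pmf.emeasure_eq_measure ennreal_leI\<close>)
  also have "\<dots> = (\<Sum>T\<in>Pow I. \<integral>\<^sup>+xs. emeasure (N T xs) (Sc T) \<partial>XS)" by simp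
  also have "\<dots> = \<integral>\<^sup>+xs. (\<Sum>T\<in>Pow I. emeasure (N T xs) (Sc T)) \<partial>XS"
    by (rule nn_integral_sum[symmetric]) simp
  also have "\<dots> \<le> \<integral>\<^sup>+xs. ennreal (real c / 2) \<partial>XS"
  proof (rule nn_integral_mono_AE)
    show "AE xs in measure_pmf XS. (\<Sum>T\<in>Pow I. emeasure (N T xs) (Sc T)) \<le> ennreal (real c / 2)"
      unfolding AE_measure_pmf_iff
    proof
      fix xs assume xs: "xs \<in> set_pmf XS"
      have "(\<Sum>T\<in>Pow I. emeasure (N T xs) (Sc T)) = ennreal (\<Sum>T\<in>Pow I. measure_pmf.prob (N T xs) (Sc T))"
        by (simp add: measure_pmf.emeasure_eq_measure)
      also have "\<dots> \<le> ennreal (real c / 2)" using pw[OF xs] by (simp add: c_def ennreal_leI)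
      finally show "(\<Sum>T\<in>Pow I. emeasure (N T xs) (Sc T)) \<le> ennreal (real c / 2)" .
    qed
  qed
  also have "\<dots> = ennreal (real c / 2)" by simp
  finally have "ennreal (real c * (1 - \<delta>)) \<le> ennreal (real c / 2)"
    using d1 by (simp add: c_def ennreal_mult' ennreal_of_nat_eq_real_of_nat)
  hence "real c * (1 - \<delta>) \<le> real c / 2" by (simp add: ennreal_le_iff)
  moreover have "0 < real c * (1/2 - \<delta>)" using cpos d1 by simp
  moreover have "real c * (1 - \<delta>) = real c / 2 + real c * (1/2 - \<delta>)" by (simp add: algebra_simps)
  ultimately show False by linarith
qed
theorem lemmaC1:
  fixes X :: "'a set" and m :: nat
  assumes "m > 0" and "finite X" and "card X = 4 * m"
  shows "(\<forall>\<epsilon> \<delta>. \<epsilon> \<ge> 0 \<longrightarrow> \<delta> \<ge> 0 \<longrightarrow>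
            compl_num X (pmf_of_set X) (fixed_pos_class X m) (fixed_pos_class X (2 * m)) \<epsilon> \<delta> = 0)
       \<and> (\<forall>\<epsilon> \<delta>. 0 < \<epsilon> \<longrightarrow> \<epsilon> < 1/4 \<longrightarrow> 0 < \<delta> \<longrightarrow> \<delta> < 1/2 \<longrightarrow>
            ereal ((1/2 - 2 * \<epsilon>) * real m) \<le>
              ereal_of_enat (compl_num X (pmf_of_set X) (fixed_pos_class X (2 * m)) (fixed_pos_class X m) \<epsilon> \<delta>))"
proof (intro conjI allI impI)
  fix \<epsilon> \<delta> :: real
  assume "\<epsilon> \<ge> 0" "\<delta> \<ge> 0"
  then have ex: "\<exists>L. is_compl_learner X (pmf_of_set X) (fixed_pos_class X m) (fixed_pos_class X (2 * m)) \<epsilon> \<delta> 0 L"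
    using part1[OF assms] by blast
  hence "(LEAST n. \<exists>L. is_compl_learner X (pmf_of_set X) (fixed_pos_class X m) (fixed_pos_class X (2 * m)) \<epsilon> \<delta> n L) = 0"
    by (rule Least_eq_0)
  thus "compl_num X (pmf_of_set X) (fixed_pos_class X m) (fixed_pos_class X (2 * m)) \<epsilon> \<delta> = 0"
    using ex unfolding compl_num_def by (auto simp: zero_enat_def)
next
  fix \<epsilon> \<delta> :: real
  assume h: "0 < \<epsilon>" "\<epsilon> < 1/4" "0 < \<delta>" "\<delta> < 1/2"
  show "ereal ((1/2 - 2 * \<epsilon>) * real m) \<le>
        ereal_of_enat (compl_num X (pmf_of_set X) (fixed_pos_class X (2 * m)) (fixed_pos_class X m) \<epsilon> \<delta>)"
  proof (cases "\<exists>n L. is_compl_learner X (pmf_of_set X) (fixed_pos_class X (2 * m)) (fixed_pos_class X m) \<epsilon> \<delta> n L")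
    case True
    define k where "k = (LEAST n. \<exists>L. is_compl_learner X (pmf_of_set X) (fixed_pos_class X (2 * m)) (fixed_pos_class X m) \<epsilon> \<delta> n L)"
    have "\<exists>L. is_compl_learner X (pmf_of_set X) (fixed_pos_class X (2 * m)) (fixed_pos_class X m) \<epsilon> \<delta> k L"
      unfolding k_def by (rule LeastI_ex[OF True])
    then obtain L where "is_compl_learner X (pmf_of_set X) (fixed_pos_class X (2 * m)) (fixed_pos_class X m) \<epsilon> \<delta> k L" by blast
    from part2[OF assms h(1,2,4) this] have k: "(1 - 4 * \<epsilon>) * real m \<le> real k" .
    have "(1/2 - 2 * \<epsilon>) * real m \<le> (1 - 4 * \<epsilon>) * real m"
      using h by (intro mult_right_mono) auto
    hence "(1/2 - 2 * \<epsilon>) * real m \<le> real k" using k by linarith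
    thus ?thesis using True unfolding compl_num_def k_def[symmetric] by simp
  next
    case False
    thus ?thesis unfolding compl_num_def by auto
  qed
qed

end
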